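(* There exist constants $\epsilon_1'>0$, $\tau_1'>0$ and $C>0$, depending only on $\underline{U}=(1,0)^{\top}$ and $a_\infty$, such that the following holds for all $\tau\in(0,\tau_1')$ and all states $U_L,U_R$ in the $\epsilon_1'$-neighborhood of $\underline{U}$. (a) Let $k\in\{1,2\}$. If $U_R=\Phi(\beta_1,\beta_2;U_L)$ and $U_R=\Phi_k(\alpha_k;U_L,\tau^2)$, then $|\beta_j-\delta_{jk}\alpha_k|\le C|\alpha_k|\tau^2$ for $j=1,2$, where $\delta_{jk}$ is the Kronecker symbol. (b) If $U_R=\Phi(\beta_1,\beta_2;U_L)$ and $\alpha=|U_R-U_L|$, then $|\beta_j|\le C\alpha$ for $j=1,2$.
   Context: Fix $\gamma>1$ and $a_\infty>0$; states are $U=(\rho,v)^{\top}$. Velocity function. For $\tau>0$ let $$u(\rho,v;\tau^2)=\tau^{-2}\Big(-1+\sqrt{1-\tau^2\big(v^2+\tfrac{2(\rho^{\gamma-1}-1)}{(\gamma-1)a_\infty^2}\big)}\Big),$$ and let $u(\rho,v;0)=-\tfrac12v^2-\tfrac{\rho^{\gamma-1}-1}{(\gamma-1)a_\infty^2}$. Systems. Set $G(U,\tau^2)=(\rho(1+\tau^2u),v)^{\top}$ and $F(U,\tau^2)=(\rho v,-u)^{\top}$, and consider $\partial_xG(U,\tau^2)+\partial_yF(U,\tau^2)=0$. At $\tau=0$ this is $\partial_xU+\partial_yF(U,0)=0$ with $F(U,0)=(\rho v,\tfrac12v^2+\tfrac{\rho^{\gamma-1}-1}{(\gamma-1)a_\infty^2})^{\top}$.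 Near $\underline{U}$ and for small $\tau\ge0$ these systems are strictly hyperbolic, with characteristic speeds $\lambda_1<\lambda_2$ and genuinely nonlinear fields. Let $r_k(U,\tau^2)$ be the right eigenvectors, normalized by $\nabla_U\lambda_k\cdot r_k=1$. Wave curves. For $k=1,2$, $\alpha\mapsto\Phi_k(\alpha;U,\tau^2)$ denotes the $k$-th physically admissible wave curve through $U$: - it is the Lax shock curve for $\alpha<0$ and the rarefaction curve for $\alpha>0$; - it is $C^2$ in $(\alpha,U,\tau^2)$ near $(0,\underline{U},0)$; - $\Phi_k(0;U,\tau^2)=U$ and $\partial_\alpha\Phi_k(0;U,\tau^2)=r_k(U,\tau^2)$. For the $\tau=0$ system write $\Phi_k(\alpha;U):=\Phi_k(\alpha;U,0)$. Compositions: - $\Phi(\alpha_1,\alpha_2;U,\tau^2)=\Phi_2(\alpha_2;\Phi_1(\alpha_1;U,\tau^2),\tau^2)$; - $\Phi(\beta_1,\beta_2;U)=\Phi_2(\beta_2;\Phi_1(\beta_1;U))$. *)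

theory Defs
  imports "HOL-Analysis.Analysis"
begin

text \<open>States U = (rho, v) are modelled as pairs of reals.  The parameter s stands
  for tau^2.\<close>

definition Ubar :: "real \<times> real" where
  "Ubar = (1, 0)"

definition uvel :: "real \<Rightarrow> real \<Rightarrow> real \<times> real \<Rightarrow> real \<Rightarrow> real" where
  "uvel \<gamma> ainf U s =
     (let \<rho> = fst U; v = snd U;
          q = v^2 + 2 * (\<rho> powr (\<gamma> - 1) - 1) / ((\<gamma> - 1) * ainf^2)
      in if s = 0 then - (v^2) / 2 - (\<rho> powr (\<gamma> - 1) - 1) / ((\<gamma> - 1) * ainf^2)
         else (-1 + sqrt (1 - s * q)) / s)"

definition Gf :: "real \<Rightarrow> real \<Rightarrow> real \<times> real \<Rightarrow> real \<Rightarrow> real \<times> real" where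
  "Gf \<gamma> ainf U s = (fst U * (1 + s * uvel \<gamma> ainf U s), snd U)"

definition Ff :: "real \<Rightarrow> real \<Rightarrow> real \<times> real \<Rightarrow> real \<Rightarrow> real \<times> real" where
  "Ff \<gamma> ainf U s = (fst U * snd U, - uvel \<gamma> ainf U s)"

definition C2_on :: "'a::real_normed_vector set \<Rightarrow> ('a \<Rightarrow> 'b::real_normed_vector) \<Rightarrow> bool" where
  "C2_on D f \<longleftrightarrow> (\<exists>f' :: 'a \<Rightarrow> ('a \<Rightarrow>\<^sub>L 'b). \<exists>f'' :: 'a \<Rightarrow> ('a \<Rightarrow>\<^sub>L ('a \<Rightarrow>\<^sub>L 'b)).
      (\<forall>x\<in>D. (f has_derivative blinfun_apply (f' x)) (at x within D)
             \<and> (f' has_derivative blinfun_apply (f'' x)) (at x within D))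
      \<and> continuous_on D f'')"

definition WDom :: "real \<Rightarrow> (real \<times> (real \<times> real) \<times> real) set" where
  "WDom \<delta> = {(\<alpha>, U, s). \<bar>\<alpha>\<bar> < \<delta> \<and> dist U Ubar < \<delta> \<and> 0 \<le> s \<and> s < \<delta>}"

text \<open>Characteristic speeds lam k U s (k = 1,2) and right eigenvectors r k U s of the
  system  d_x G(U,s) + d_y F(U,s) = 0 :  DF r = lam DG r, r \<noteq> 0, lam_1 < lam_2
  (strict hyperbolicity), normalised by grad lam_k . r_k = 1 (genuine nonlinearity).\<close>
definition char_fields ::
  "real \<Rightarrow> real \<Rightarrow> real \<Rightarrow> (nat \<Rightarrow> real \<times> real \<Rightarrow> real \<Rightarrow> real)
     \<Rightarrow> (nat \<Rightarrow> real \<times> real \<Rightarrow> real \<Rightarrow> real \<times> real) \<Rightarrow> bool" where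
  "char_fields \<gamma> ainf \<delta> lam r \<longleftrightarrow>
     (\<forall>U s. dist U Ubar < \<delta> \<and> 0 \<le> s \<and> s < \<delta> \<longrightarrow>
        lam 1 U s < lam 2 U s \<and>
        (\<forall>k\<in>{1,2}. r k U s \<noteq> 0 \<and>
           (\<exists>DF DG Dl.
              ((\<lambda>V. Ff \<gamma> ainf V s) has_derivative DF) (at U) \<and>
              ((\<lambda>V. Gf \<gamma> ainf V s) has_derivative DG) (at U) \<and>
              ((\<lambda>V. lam k V s) has_derivative Dl) (at U) \<and>
              DF (r k U s) = lam k U s *\<^sub>R DG (r k U s) \<and>
              Dl (r k U s) = 1)))"

text \<open>Phi k alpha U s is the k-th physically admissible wave curve through U:
  C^2 in (alpha,U,s) near (0,Ubar,0); Phi_k(0)=U, d_alpha Phi_k(0)=r_k;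
  rarefaction (integral curve of r_k) for alpha > 0; Lax shock for alpha < 0.\<close>
definition wave_curves ::
  "real \<Rightarrow> real \<Rightarrow> real \<Rightarrow> (nat \<Rightarrow> real \<times> real \<Rightarrow> real \<Rightarrow> real)
     \<Rightarrow> (nat \<Rightarrow> real \<times> real \<Rightarrow> real \<Rightarrow> real \<times> real)
     \<Rightarrow> (nat \<Rightarrow> real \<Rightarrow> real \<times> real \<Rightarrow> real \<Rightarrow> real \<times> real) \<Rightarrow> bool" where
  "wave_curves \<gamma> ainf \<delta> lam r Phi \<longleftrightarrow>
     (\<forall>k\<in>{1,2}.
        C2_on (WDom \<delta>) (\<lambda>(\<alpha>, U, s). Phi k \<alpha> U s) \<and>
        (\<forall>U s. dist U Ubar < \<delta> \<and> 0 \<le> s \<and> s < \<delta> \<longrightarrow>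
           Phi k 0 U s = U \<and>
           ((\<lambda>\<alpha>. Phi k \<alpha> U s) has_vector_derivative r k U s) (at 0)) \<and>
        (\<forall>\<alpha> U s. (\<alpha>, U, s) \<in> WDom \<delta> \<and> 0 < \<alpha> \<and> dist (Phi k \<alpha> U s) Ubar < \<delta> \<longrightarrow>
           ((\<lambda>t. Phi k t U s) has_vector_derivative r k (Phi k \<alpha> U s) s) (at \<alpha>)) \<and>
        (\<forall>\<alpha> U s. (\<alpha>, U, s) \<in> WDom \<delta> \<and> \<alpha> < 0 \<and> dist (Phi k \<alpha> U s) Ubar < \<delta> \<longrightarrow>
           (\<exists>\<sigma>. \<sigma> *\<^sub>R (Gf \<gamma> ainf (Phi k \<alpha> U s) s - Gf \<gamma> ainf U s)
                   = Ff \<gamma> ainf (Phi k \<alpha> U s) s - Ff \<gamma> ainf U s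
                \<and> lam k (Phi k \<alpha> U s) s < \<sigma> \<and> \<sigma> < lam k U s)))"

definition Phi0 :: "(nat \<Rightarrow> real \<Rightarrow> real \<times> real \<Rightarrow> real \<Rightarrow> real \<times> real)
     \<Rightarrow> real \<Rightarrow> real \<Rightarrow> real \<times> real \<Rightarrow> real \<times> real" where
  "Phi0 Phi b1 b2 U = Phi 2 b2 (Phi 1 b1 U 0) 0"

end

theory Submission
  imports Defs
begin


definition Kset :: "real \<Rightarrow> (real \<times> (real \<times> real) \<times> real) set" where
  "Kset \<eta> = {-\<eta>..\<eta>} \<times> (cball Ubar \<eta> \<times> {0..\<eta>})"

lemma Kset_sub: "0 < \<eta> \<Longrightarrow> \<eta> < \<delta> \<Longrightarrow> Kset \<eta> \<subseteq> WDom \<delta>"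
  by (auto simp: Kset_def WDom_def dist_commute)

lemma Kset_convex: "convex (Kset \<eta>)"
  unfolding Kset_def by (intro convex_Times convex_cball convex_real_interval)

lemma Kset_compact: "compact (Kset \<eta>)"
  unfolding Kset_def by (intro compact_Times compact_cball compact_Icc)

lemma lipF:
  fixes f :: "real \<times> (real \<times> real) \<times> real \<Rightarrow> real \<times> real"
  assumes "C2_on (WDom \<delta>) f" "0 < \<eta>" "\<eta> < \<delta>"
  obtains F L where "L \<ge> 0"
    "\<And>x. x \<in> WDom \<delta> \<Longrightarrow> (f has_derivative blinfun_apply (F x)) (at x within WDom \<delta>)"
    "\<And>x y. x \<in> Kset \<eta> \<Longrightarrow> y \<in> Kset \<eta> \<Longrightarrow> norm (F x - F y) \<le> L * norm (x - y)"
proof -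
  from assms(1) obtain F F2 where d: "\<forall>x\<in>WDom \<delta>. (f has_derivative blinfun_apply (F x)) (at x within WDom \<delta>)
      \<and> (F has_derivative blinfun_apply (F2 x)) (at x within WDom \<delta>)" and c: "continuous_on (WDom \<delta>) F2"
    unfolding C2_on_def by blast
  have sub: "Kset \<eta> \<subseteq> WDom \<delta>" using Kset_sub assms by blast
  have "compact (F2 ` Kset \<eta>)"
    using compact_continuous_image[OF continuous_on_subset[OF c sub] Kset_compact] .
  then obtain B where B: "\<forall>y\<in>F2 ` Kset \<eta>. norm y \<le> B" by (meson compact_imp_bounded bounded_iff)
  have "norm (F x - F y) \<le> max B 0 * norm (x - y)" if "x \<in> Kset \<eta>" "y \<in> Kset \<eta>" for x y
  proof (rule differentiable_bound[of "Kset \<eta>" F "\<lambda>x. blinfun_apply (F2 x)"])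
    show "convex (Kset \<eta>)" by (rule Kset_convex)
    show "(F has_derivative blinfun_apply (F2 z)) (at z within Kset \<eta>)" if "z \<in> Kset \<eta>" for z
      using d that sub by (meson has_derivative_subset subsetD)
    show "onorm (blinfun_apply (F2 z)) \<le> max B 0" if "z \<in> Kset \<eta>" for z
      using B that by (simp add: norm_blinfun.rep_eq[symmetric]) (meson le_max_iff_disj)
  qed (use that in auto)
  then show ?thesis using that[of "max B 0" F] d by auto
qed

lemma linF:
  fixes f :: "real \<times> (real \<times> real) \<times> real \<Rightarrow> real \<times> real"
  assumes d: "\<And>x. x \<in> WDom \<delta> \<Longrightarrow> (f has_derivative blinfun_apply (F x)) (at x within WDom \<delta>)"
    and lip: "\<And>x y. x \<in> Kset \<eta> \<Longrightarrow> y \<in> Kset \<eta> \<Longrightarrow> norm (F x - F y) \<le> L * norm (x - y)"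
    and "0 < \<eta>" "\<eta> < \<delta>" "x0 \<in> Kset \<eta>" "L \<ge> 0"
    and x: "x \<in> Kset \<eta> \<inter> cball x0 \<rho>" and y: "y \<in> Kset \<eta> \<inter> cball x0 \<rho>"
  shows "norm (f x - f y - F x0 (x - y)) \<le> norm (x - y) * (L * \<rho>)"
proof -
  have sub: "Kset \<eta> \<subseteq> WDom \<delta>" using Kset_sub assms by blast
  have cv: "convex (Kset \<eta> \<inter> cball x0 \<rho>)" by (intro convex_Int Kset_convex convex_cball)
  show ?thesis
  proof (rule differentiable_bound_linearization[of y x "Kset \<eta> \<inter> cball x0 \<rho>" f "\<lambda>z. blinfun_apply (F z)" x0])
    show "y + t *\<^sub>R (x - y) \<in> Kset \<eta> \<inter> cball x0 \<rho>" if "t \<in> {0..1}" for t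
    proof -
      have "(1 - t) *\<^sub>R y + t *\<^sub>R x \<in> Kset \<eta> \<inter> cball x0 \<rho>"
        using that x y cv by (intro convexD) auto
      moreover have "(1 - t) *\<^sub>R y + t *\<^sub>R x = y + t *\<^sub>R (x - y)" by (simp add: algebra_simps)
      ultimately show ?thesis by simp
    qed
    show "(f has_derivative blinfun_apply (F z)) (at z within Kset \<eta> \<inter> cball x0 \<rho>)"
      if "z \<in> Kset \<eta> \<inter> cball x0 \<rho>" for z
      using d[of z] that sub by (meson IntD1 has_derivative_subset inf_le1 order_trans subsetD)
    show "onorm (blinfun_apply (F z) - blinfun_apply (F x0)) \<le> L * \<rho>"
      if "z \<in> Kset \<eta> \<inter> cball x0 \<rho>" for z
    proof -
      have "onorm (blinfun_apply (F z) - blinfun_apply (F x0)) = norm (F z - F x0)"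
        by (simp add: norm_blinfun.rep_eq minus_blinfun.rep_eq fun_diff_def)
      also have "\<dots> \<le> L * norm (z - x0)" using lip that assms(5) by auto
      also have "\<dots> \<le> L * \<rho>" using that \<open>L \<ge> 0\<close>
        by (intro mult_left_mono) (auto simp: dist_norm norm_minus_commute)
      finally show ?thesis .
    qed
    show "x0 \<in> Kset \<eta> \<inter> cball x0 \<rho>" using assms(5) x
      by (auto intro: order_trans[OF zero_le_dist])
  qed
qed

lemma sF:
  fixes f :: "real \<times> (real \<times> real) \<times> real \<Rightarrow> real \<times> real"
  assumes d: "\<And>x. x \<in> WDom \<delta> \<Longrightarrow> (f has_derivative blinfun_apply (F x)) (at x within WDom \<delta>)"
    and lip: "\<And>x y. x \<in> Kset \<eta> \<Longrightarrow> y \<in> Kset \<eta> \<Longrightarrow> norm (F x - F y) \<le> L * norm (x - y)"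
    and "0 < \<eta>" "\<eta> < \<delta>" "L \<ge> 0"
    and f0: "\<And>U s. dist U Ubar < \<delta> \<Longrightarrow> 0 \<le> s \<Longrightarrow> s < \<delta> \<Longrightarrow> f (0, U, s) = U"
    and a: "\<bar>\<alpha>\<bar> \<le> \<eta>" and U: "U \<in> cball Ubar \<eta>" and s: "0 \<le> s" "s \<le> \<eta>"
  shows "norm (f (\<alpha>, U, s) - f (\<alpha>, U, 0)) \<le> L * s * \<bar>\<alpha>\<bar>"
proof -
  have sub: "Kset \<eta> \<subseteq> WDom \<delta>" using Kset_sub assms by blast
  have dK: "(f has_derivative blinfun_apply (F z)) (at z within Kset \<eta>)" if "z \<in> Kset \<eta>" for z
    using d[of z] that sub by (meson has_derivative_subset subsetD)
  define \<phi> where "\<phi> t = f (t, U, s) - f (t, U, 0)" for t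
  have inK: "(t, U, s') \<in> Kset \<eta>" if "t \<in> {-\<eta>..\<eta>}" "0 \<le> s'" "s' \<le> \<eta>" for t s'
    using that U by (auto simp: Kset_def)
  have "norm (\<phi> \<alpha> - \<phi> 0) \<le> (L * s) * norm (\<alpha> - 0)"
  proof (rule differentiable_bound[of "{-\<eta>..\<eta>}" \<phi> "\<lambda>t h. F (t, U, s) (h, 0, 0) - F (t, U, 0) (h, 0, 0)"])
    show "convex {-\<eta>..\<eta>}" by simp
    show "(\<phi> has_derivative (\<lambda>h. F (t, U, s) (h, 0, 0) - F (t, U, 0) (h, 0, 0))) (at t within {-\<eta>..\<eta>})"
      if "t \<in> {-\<eta>..\<eta>}" for t
    proof -
      have l: "((\<lambda>t. (t, U, s')) has_derivative (\<lambda>h. (h, 0, 0))) (at t within {-\<eta>..\<eta>})" for s'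
        by (auto intro!: derivative_eq_intros simp: zero_prod_def)
      have "((\<lambda>t. f (t, U, s')) has_derivative (\<lambda>h. F (t, U, s') (h, 0, 0))) (at t within {-\<eta>..\<eta>})"
        if "0 \<le> s'" "s' \<le> \<eta>" for s'
        using has_derivative_in_compose2[of "Kset \<eta>" f "\<lambda>x. blinfun_apply (F x)" "\<lambda>t. (t, U, s')" "{-\<eta>..\<eta>}" t "\<lambda>h. (h, 0, 0)", OF dK _ _ l]
          inK that \<open>t \<in> {-\<eta>..\<eta>}\<close> by (auto simp: image_subset_iff)
      from has_derivative_diff[OF this[of s] this[of 0]] s \<open>0 < \<eta>\<close>
      show ?thesis unfolding \<phi>_def by simp
    qed
    show "onorm (\<lambda>h. F (t, U, s) (h, 0, 0) - F (t, U, 0) (h, 0, 0)) \<le> L * s" if "t \<in> {-\<eta>..\<eta>}" for t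
    proof (rule onorm_bound)
      show "0 \<le> L * s" using s \<open>L \<ge> 0\<close> by simp
      fix h :: real
      have "norm (F (t, U, s) (h, 0, 0) - F (t, U, 0) (h, 0, 0)) = norm ((F (t, U, s) - F (t, U, 0)) (h, 0, 0))"
        by (simp add: blinfun.diff_left)
      also have "\<dots> \<le> norm (F (t, U, s) - F (t, U, 0)) * norm (h, (0::real\<times>real), (0::real))"
        by (rule norm_blinfun)
      also have "\<dots> \<le> (L * s) * norm h"
      proof (rule mult_mono)
        have "norm (F (t, U, s) - F (t, U, 0)) \<le> L * norm ((t, U, s) - (t, U, 0))"
          using lip[OF inK[OF that s] inK[OF that, of 0]] \<open>0 < \<eta>\<close> by simp
        also have "norm ((t, U, s) - (t, U, 0)) = s" using s by (simp add: norm_Pair)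
        finally show "norm (F (t, U, s) - F (t, U, 0)) \<le> L * s" .
        show "norm (h, (0::real\<times>real), (0::real)) \<le> norm h" by (simp add: norm_Pair)
      qed (use s \<open>L \<ge> 0\<close> in auto)
      finally show "norm (F (t, U, s) (h, 0, 0) - F (t, U, 0) (h, 0, 0)) \<le> L * s * norm h" .
    qed
  qed (use a \<open>0 < \<eta>\<close> in auto)
  moreover have "\<phi> 0 = 0"
  proof -
    have "dist U Ubar < \<delta>" using U \<open>\<eta> < \<delta>\<close> by (auto simp: dist_commute)
    then show ?thesis unfolding \<phi>_def using f0 s \<open>\<eta> < \<delta>\<close> \<open>0 < \<eta>\<close> by simp
  qed
  ultimately show ?thesis unfolding \<phi>_def by (simp add: mult.assoc)
qed




lemma idA:
  fixes f :: "real \<times> (real \<times> real) \<times> real \<Rightarrow> real \<times> real"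
  assumes d: "\<And>x. x \<in> WDom \<delta> \<Longrightarrow> (f has_derivative blinfun_apply (F x)) (at x within WDom \<delta>)"
    and "0 < \<delta>"
    and rv: "((\<lambda>t. f (t, Ubar, 0)) has_vector_derivative rv) (at 0)"
  shows "blinfun_apply (F (0, Ubar, 0)) (h, 0, 0) = h *\<^sub>R rv"
proof -
  have l: "((\<lambda>t. (t, Ubar, 0::real)) has_derivative (\<lambda>h. (h, 0, 0))) (at 0 within {-\<delta><..<\<delta>})"
    by (auto intro!: derivative_eq_intros simp: zero_prod_def)
  have "((\<lambda>t. f (t, Ubar, 0)) has_derivative (\<lambda>h. F (0, Ubar, 0) (h, 0, 0))) (at 0 within {-\<delta><..<\<delta>})"
    using has_derivative_in_compose2[of "WDom \<delta>" f "\<lambda>x. blinfun_apply (F x)" "\<lambda>t. (t, Ubar, 0)" "{-\<delta><..<\<delta>}" 0 "\<lambda>h. (h, 0, 0)", OF d _ _ l]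
      \<open>0 < \<delta>\<close> by (simp add: image_subset_iff WDom_def abs_less_iff)
  moreover have "at (0::real) within {-\<delta><..<\<delta>} = at 0"
    using \<open>0 < \<delta>\<close> by (intro at_within_open) auto
  ultimately have "((\<lambda>t. f (t, Ubar, 0)) has_derivative (\<lambda>h. F (0, Ubar, 0) (h, 0, 0))) (at 0)"
    by metis
  from has_derivative_unique[OF this rv[unfolded has_vector_derivative_def]]
  have "(\<lambda>h. F (0, Ubar, 0) (h, 0, 0)) = (\<lambda>h. h *\<^sub>R rv)" .
  then show ?thesis by (rule fun_cong)
qed

lemma idU:
  fixes f :: "real \<times> (real \<times> real) \<times> real \<Rightarrow> real \<times> real"
  assumes d: "\<And>x. x \<in> WDom \<delta> \<Longrightarrow> (f has_derivative blinfun_apply (F x)) (at x within WDom \<delta>)"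
    and "0 < \<delta>"
    and f0: "\<And>U. dist U Ubar < \<delta> \<Longrightarrow> f (0, U, 0) = U"
  shows "blinfun_apply (F (0, Ubar, 0)) (0, w, 0) = w"
proof -
  have l: "((\<lambda>U. (0::real, U, 0::real)) has_derivative (\<lambda>w. (0, w, 0))) (at Ubar within ball Ubar \<delta>)"
    by (auto intro!: derivative_eq_intros simp: zero_prod_def)
  have "((\<lambda>U. f (0, U, 0)) has_derivative (\<lambda>w. F (0, Ubar, 0) (0, w, 0))) (at Ubar within ball Ubar \<delta>)"
    using has_derivative_in_compose2[of "WDom \<delta>" f "\<lambda>x. blinfun_apply (F x)" "\<lambda>U. (0, U, 0)" "ball Ubar \<delta>" Ubar "\<lambda>w. (0, w, 0)", OF d _ _ l]
      \<open>0 < \<delta>\<close> by (simp add: image_subset_iff WDom_def dist_commute)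
  moreover have "at Ubar within ball Ubar \<delta> = at Ubar"
    using \<open>0 < \<delta>\<close> by (intro at_within_open) auto
  ultimately have "((\<lambda>U. f (0, U, 0)) has_derivative (\<lambda>w. F (0, Ubar, 0) (0, w, 0))) (at Ubar)"
    by metis
  moreover
  have "((\<lambda>U. f (0, U, 0)) has_derivative (\<lambda>w. w)) (at Ubar)"
    by (rule has_derivative_transform_within_open[OF has_derivative_ident, of "ball Ubar \<delta>"])
       (use \<open>0 < \<delta>\<close> f0 in \<open>auto simp: dist_commute\<close>)
  ultimately have "(\<lambda>w. F (0, Ubar, 0) (0, w, 0)) = (\<lambda>w. w)" by (rule has_derivative_unique)
  then show ?thesis by (rule fun_cong)
qed



lemma indep:
  fixes r1 r2 :: "real \<times> real"
  assumes "linear T" "T r1 = l1 *\<^sub>R r1" "T r2 = l2 *\<^sub>R r2" "l1 \<noteq> l2" "r1 \<noteq> 0" "r2 \<noteq> 0"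
  shows "fst r1 * snd r2 - snd r1 * fst r2 \<noteq> 0"
proof
  assume d0: "fst r1 * snd r2 - snd r1 * fst r2 = 0"
  have key: "a = 0 \<and> b = 0" if "a *\<^sub>R r1 = b *\<^sub>R r2" for a b
  proof -
    have "T (a *\<^sub>R r1) = T (b *\<^sub>R r2)" using that by simp
    then have "a *\<^sub>R (l1 *\<^sub>R r1) = b *\<^sub>R (l2 *\<^sub>R r2)"
      using assms(1-3) by (simp add: linear_scale)
    then have "a *\<^sub>R (l1 *\<^sub>R r1) = l2 *\<^sub>R (a *\<^sub>R r1)" using that by (simp add: scaleR_left_commute)
    then have "(a * (l1 - l2)) *\<^sub>R r1 = 0" by (simp add: algebra_simps)
    then have "a = 0" using assms(4,5) by simp
    then show ?thesis using that assms(6) by simp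
  qed
  have "snd r2 *\<^sub>R r1 = snd r1 *\<^sub>R r2" using d0 by (simp add: prod_eq_iff algebra_simps)
  from key[OF this] have 1: "snd r2 = 0" "snd r1 = 0" by auto
  have "fst r2 *\<^sub>R r1 = fst r1 *\<^sub>R r2" using d0 by (simp add: prod_eq_iff algebra_simps)
  from key[OF this] have 2: "fst r2 = 0" "fst r1 = 0" by auto
  from 1 2 assms(5) show False by (simp add: prod_eq_iff)
qed

lemma lowerb:
  fixes r1 r2 :: "real \<times> real"
  assumes "fst r1 * snd r2 - snd r1 * fst r2 \<noteq> 0"
  obtains c where "c > 0" "\<And>a b. c * (\<bar>a\<bar> + \<bar>b\<bar>) \<le> norm (a *\<^sub>R r1 + b *\<^sub>R r2)"
proof -
  obtain p1 q1 p2 q2 where r: "r1 = (p1, q1)" "r2 = (p2, q2)" by fastforce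
  define d where "d = p1 * q2 - q1 * p2"
  define S where "S = \<bar>p1\<bar> + \<bar>q1\<bar> + \<bar>p2\<bar> + \<bar>q2\<bar>"
  have d: "d \<noteq> 0" using assms r d_def by simp
  have S: "S > 0"
  proof -
    have "\<not> (p1 = 0 \<and> q1 = 0)" using d d_def by auto
    then show ?thesis unfolding S_def by auto
  qed
  have main: "(\<bar>a\<bar> + \<bar>b\<bar>) * \<bar>d\<bar> \<le> norm (a *\<^sub>R r1 + b *\<^sub>R r2) * S" for a b
  proof -
    define w where "w = a *\<^sub>R r1 + b *\<^sub>R r2"
    have f: "fst w = a * p1 + b * p2" and s: "snd w = a * q1 + b * q2" using r by (auto simp: w_def)
    have n1: "\<bar>fst w\<bar> \<le> norm w" using norm_fst_le[of "fst w" "snd w"] by simp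
    have n2: "\<bar>snd w\<bar> \<le> norm w" using norm_snd_le[of "snd w" "fst w"] by simp
    have ea: "a * d = fst w * q2 - snd w * p2" unfolding f s d_def by algebra
    have eb: "b * d = p1 * snd w - q1 * fst w" unfolding f s d_def by algebra
    have "\<bar>a\<bar> * \<bar>d\<bar> = \<bar>fst w * q2 - snd w * p2\<bar>" by (simp add: ea abs_mult[symmetric])
    also have "\<dots> \<le> \<bar>fst w * q2\<bar> + \<bar>snd w * p2\<bar>" by (rule abs_triangle_ineq4)
    also have "\<dots> = \<bar>fst w\<bar> * \<bar>q2\<bar> + \<bar>snd w\<bar> * \<bar>p2\<bar>" by (simp add: abs_mult)
    also have "\<dots> \<le> norm w * \<bar>q2\<bar> + norm w * \<bar>p2\<bar>"
      by (intro add_mono mult_right_mono n1 n2) auto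
    finally have A: "\<bar>a\<bar> * \<bar>d\<bar> \<le> norm w * \<bar>q2\<bar> + norm w * \<bar>p2\<bar>" .
    have "\<bar>b\<bar> * \<bar>d\<bar> = \<bar>p1 * snd w - q1 * fst w\<bar>" by (simp add: eb abs_mult[symmetric])
    also have "\<dots> \<le> \<bar>p1 * snd w\<bar> + \<bar>q1 * fst w\<bar>" by (rule abs_triangle_ineq4)
    also have "\<dots> = \<bar>p1\<bar> * \<bar>snd w\<bar> + \<bar>q1\<bar> * \<bar>fst w\<bar>" by (simp add: abs_mult)
    also have "\<dots> \<le> \<bar>p1\<bar> * norm w + \<bar>q1\<bar> * norm w"
      by (intro add_mono mult_left_mono n1 n2) auto
    finally have B: "\<bar>b\<bar> * \<bar>d\<bar> \<le> \<bar>p1\<bar> * norm w + \<bar>q1\<bar> * norm w" .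
    from A B show ?thesis unfolding w_def[symmetric] S_def by (simp add: algebra_simps)
  qed
  show ?thesis
  proof (rule that[of "\<bar>d\<bar> / S"])
    show "\<bar>d\<bar> / S > 0" using d S by simp
    fix a b
    show "\<bar>d\<bar> / S * (\<bar>a\<bar> + \<bar>b\<bar>) \<le> norm (a *\<^sub>R r1 + b *\<^sub>R r2)"
      using main[of a b] S by (simp add: field_simps)
  qed
qed



lemma norm3: "norm (a::real, w::real\<times>real, 0::real) \<le> \<bar>a\<bar> + norm w"
proof -
  have "norm (a, w, 0::real) = sqrt (a\<^sup>2 + (norm w)\<^sup>2)" by (simp add: norm_Pair)
  also have "\<dots> \<le> sqrt ((\<bar>a\<bar> + norm w)\<^sup>2)"
    by (intro real_sqrt_le_mono) (simp add: power2_eq_square algebra_simps)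
  also have "\<dots> = \<bar>a\<bar> + norm w" by simp
  finally show ?thesis .
qed
lemma norm3a: "norm (a::real, 0::real\<times>real, 0::real) = \<bar>a\<bar>" by (simp add: norm_Pair)

lemma arith1:
  fixes c0 X Y K Z C :: real
  assumes "c0 > 0" "c0 / 2 * X \<le> Y" "Y \<le> K * Z" "2 * K / c0 \<le> C" "Z \<ge> 0"
  shows "X \<le> C * Z"
proof -
  have "X \<le> 2 / c0 * Y" using assms(1,2) by (simp add: field_simps)
  also have "\<dots> \<le> 2 / c0 * (K * Z)" using assms(1,3) by (intro mult_left_mono) auto
  also have "\<dots> = (2 * K / c0) * Z" by simp
  also have "\<dots> \<le> C * Z" using assms(4,5) by (intro mult_right_mono) auto
  finally show ?thesis .
qed
theorem proposition3p1:
  fixes \<gamma> ainf \<delta> :: real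
    and lam :: "nat \<Rightarrow> real \<times> real \<Rightarrow> real \<Rightarrow> real"
    and r :: "nat \<Rightarrow> real \<times> real \<Rightarrow> real \<Rightarrow> real \<times> real"
    and Phi :: "nat \<Rightarrow> real \<Rightarrow> real \<times> real \<Rightarrow> real \<Rightarrow> real \<times> real"
  assumes "\<gamma> > 1" and "ainf > 0" and "\<delta> > 0"
    and "char_fields \<gamma> ainf \<delta> lam r"
    and "wave_curves \<gamma> ainf \<delta> lam r Phi"
  shows "\<exists>\<epsilon> \<tau>1 C. \<epsilon> > 0 \<and> \<tau>1 > 0 \<and> C > 0 \<and>
    (\<forall>\<tau> UL UR. 0 < \<tau> \<and> \<tau> < \<tau>1 \<and> dist UL Ubar < \<epsilon> \<and> dist UR Ubar < \<epsilon> \<longrightarrow>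
      (\<forall>k\<in>{1::nat,2}. \<forall>\<alpha>k \<beta>1 \<beta>2.
          \<bar>\<alpha>k\<bar> < \<epsilon> \<and> \<bar>\<beta>1\<bar> < \<epsilon> \<and> \<bar>\<beta>2\<bar> < \<epsilon> \<and>
          UR = Phi0 Phi \<beta>1 \<beta>2 UL \<and> UR = Phi k \<alpha>k UL (\<tau>^2) \<longrightarrow>
            \<bar>\<beta>1 - (if k = 1 then \<alpha>k else 0)\<bar> \<le> C * \<bar>\<alpha>k\<bar> * \<tau>^2 \<and>
            \<bar>\<beta>2 - (if k = 2 then \<alpha>k else 0)\<bar> \<le> C * \<bar>\<alpha>k\<bar> * \<tau>^2) \<and>
      (\<forall>\<beta>1 \<beta>2. \<bar>\<beta>1\<bar> < \<epsilon> \<and> \<bar>\<beta>2\<bar> < \<epsilon> \<and> UR = Phi0 Phi \<beta>1 \<beta>2 UL \<longrightarrow>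
          \<bar>\<beta>1\<bar> \<le> C * norm (UR - UL) \<and> \<bar>\<beta>2\<bar> \<le> C * norm (UR - UL)))"
proof -
  note wc = assms(5)[unfolded wave_curves_def]
  define f1 where "f1 = (\<lambda>(\<alpha>, U, s). Phi 1 \<alpha> U s)"
  define f2 where "f2 = (\<lambda>(\<alpha>, U, s). Phi 2 \<alpha> U s)"
  have f1e: "f1 (a, U, s) = Phi 1 a U s" for a U s by (simp add: f1_def)
  have f2e: "f2 (a, U, s) = Phi 2 a U s" for a U s by (simp add: f2_def)
  have C1: "C2_on (WDom \<delta>) f1" using wc unfolding f1_def by auto
  have C2: "C2_on (WDom \<delta>) f2" using wc unfolding f2_def by auto
  have P0: "Phi k 0 U s = U" if "k \<in> {1,2}" "dist U Ubar < \<delta>" "0 \<le> s" "s < \<delta>" for k U s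
    using wc that by blast
  have PV: "((\<lambda>\<alpha>. Phi k \<alpha> U s) has_vector_derivative r k U s) (at 0)"
    if "k \<in> {1,2}" "dist U Ubar < \<delta>" "0 \<le> s" "s < \<delta>" for k U s
    using wc that by blast
  define \<eta> where "\<eta> = \<delta> / 2"
  have \<eta>: "0 < \<eta>" "\<eta> < \<delta>" using assms(3) by (auto simp: \<eta>_def)
  obtain L1 F1 where L1: "L1 \<ge> 0"
    and d1: "\<And>x. x \<in> WDom \<delta> \<Longrightarrow> (f1 has_derivative blinfun_apply (F1 x)) (at x within WDom \<delta>)"
    and l1: "\<And>x y. x \<in> Kset \<eta> \<Longrightarrow> y \<in> Kset \<eta> \<Longrightarrow> norm (F1 x - F1 y) \<le> L1 * norm (x - y)"
    by (rule lipF[OF C1 \<eta>]) (rule that, assumption+)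
  obtain L2 F2 where L2: "L2 \<ge> 0"
    and d2: "\<And>x. x \<in> WDom \<delta> \<Longrightarrow> (f2 has_derivative blinfun_apply (F2 x)) (at x within WDom \<delta>)"
    and l2: "\<And>x y. x \<in> Kset \<eta> \<Longrightarrow> y \<in> Kset \<eta> \<Longrightarrow> norm (F2 x - F2 y) \<le> L2 * norm (x - y)"
    by (rule lipF[OF C2 \<eta>]) (rule that, assumption+)
  define L where "L = L1 + L2"
  have L: "L \<ge> 0" using L1 L2 by (simp add: L_def)
  have lip1: "norm (F1 x - F1 y) \<le> L * norm (x - y)" if "x \<in> Kset \<eta>" "y \<in> Kset \<eta>" for x y
  proof -
    have "L1 * norm (x - y) \<le> L * norm (x - y)" using L2 by (intro mult_right_mono) (auto simp: L_def)
    then show ?thesis using l1[OF that] by linarith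
  qed
  have lip2: "norm (F2 x - F2 y) \<le> L * norm (x - y)" if "x \<in> Kset \<eta>" "y \<in> Kset \<eta>" for x y
  proof -
    have "L2 * norm (x - y) \<le> L * norm (x - y)" using L1 by (intro mult_right_mono) (auto simp: L_def)
    then show ?thesis using l2[OF that] by linarith
  qed
  define x0 :: "real \<times> (real \<times> real) \<times> real" where "x0 = (0, Ubar, 0)"
  have x0K: "x0 \<in> Kset \<eta>" using \<eta> by (simp add: x0_def Kset_def)
  define r1 where "r1 = r 1 Ubar 0"
  define r2 where "r2 = r 2 Ubar 0"
  have f0_1: "f1 (0, U, s) = U" if "dist U Ubar < \<delta>" "0 \<le> s" "s < \<delta>" for U s
    using P0[of 1 U s] that by (simp add: f1e)
  have f0_2: "f2 (0, U, s) = U" if "dist U Ubar < \<delta>" "0 \<le> s" "s < \<delta>" for U s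
    using P0[of 2 U s] that by (simp add: f2e)
  have idr1: "F1 x0 (h, 0, 0) = h *\<^sub>R r1" for h
    unfolding x0_def r1_def
  proof (rule idA[OF d1 assms(3)])
    have "((\<lambda>t. Phi 1 t Ubar 0) has_vector_derivative r 1 Ubar 0) (at 0)"
      using PV[of 1 Ubar 0] assms(3) by simp
    moreover have "(\<lambda>t. f1 (t, Ubar, 0)) = (\<lambda>t. Phi 1 t Ubar 0)" by (simp add: f1e)
    ultimately show "((\<lambda>t. f1 (t, Ubar, 0)) has_vector_derivative r 1 Ubar 0) (at 0)" by simp
  qed
  have idr2: "F2 x0 (h, 0, 0) = h *\<^sub>R r2" for h
    unfolding x0_def r2_def
  proof (rule idA[OF d2 assms(3)])
    have "((\<lambda>t. Phi 2 t Ubar 0) has_vector_derivative r 2 Ubar 0) (at 0)"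
      using PV[of 2 Ubar 0] assms(3) by simp
    moreover have "(\<lambda>t. f2 (t, Ubar, 0)) = (\<lambda>t. Phi 2 t Ubar 0)" by (simp add: f2e)
    ultimately show "((\<lambda>t. f2 (t, Ubar, 0)) has_vector_derivative r 2 Ubar 0) (at 0)" by simp
  qed
  have idr1': "F1 x0 (h, 0) = h *\<^sub>R r1" for h
    using idr1[of h] by (simp add: zero_prod_def)
  have idw: "F2 x0 (0, w, 0) = w" for w
    unfolding x0_def
    by (rule idU[OF d2 assms(3)]) (use f0_2 assms(3) in auto)
  have F2lin: "F2 x0 (a, w, 0) = a *\<^sub>R r2 + w" for a w
  proof -
    have "(a, w, 0::real) = (a, 0, 0) + (0, w, 0)" by simp
    then have "F2 x0 (a, w, 0) = F2 x0 (a, 0, 0) + F2 x0 (0, w, 0)" by (metis blinfun.add_right)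
    then show ?thesis by (simp add: idr2 idw)
  qed
  have det: "fst r1 * snd r2 - snd r1 * fst r2 \<noteq> 0"
  proof -
    note cf = assms(4)[unfolded char_fields_def, rule_format, of Ubar 0]
    have cfu: "lam 1 Ubar 0 < lam 2 Ubar 0 \<and> (\<forall>k\<in>{1,2}. r k Ubar 0 \<noteq> 0 \<and>
           (\<exists>DF DG Dl.
              ((\<lambda>V. Ff \<gamma> ainf V 0) has_derivative DF) (at Ubar) \<and>
              ((\<lambda>V. Gf \<gamma> ainf V 0) has_derivative DG) (at Ubar) \<and>
              ((\<lambda>V. lam k V 0) has_derivative Dl) (at Ubar) \<and>
              DF (r k Ubar 0) = lam k Ubar 0 *\<^sub>R DG (r k Ubar 0) \<and>
              Dl (r k Ubar 0) = 1))"
      using cf assms(3) by simp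
    have Gid: "(\<lambda>V. Gf \<gamma> ainf V 0) = (\<lambda>V. V)" by (simp add: Gf_def)
    obtain DF DG Dl where a1: "((\<lambda>V. Ff \<gamma> ainf V 0) has_derivative DF) (at Ubar)"
      "((\<lambda>V. Gf \<gamma> ainf V 0) has_derivative DG) (at Ubar)"
      "DF r1 = lam 1 Ubar 0 *\<^sub>R DG r1"
      using cfu unfolding r1_def by blast
    obtain DF' DG' Dl' where a2: "((\<lambda>V. Ff \<gamma> ainf V 0) has_derivative DF') (at Ubar)"
      "((\<lambda>V. Gf \<gamma> ainf V 0) has_derivative DG') (at Ubar)"
      "DF' r2 = lam 2 Ubar 0 *\<^sub>R DG' r2"
      using cfu unfolding r2_def by blast
    have "DG = (\<lambda>V. V)" using has_derivative_unique[OF a1(2)] has_derivative_ident unfolding Gid by blast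
    moreover have "DG' = (\<lambda>V. V)" using has_derivative_unique[OF a2(2)] has_derivative_ident unfolding Gid by blast
    moreover have "DF' = DF" using has_derivative_unique[OF a2(1) a1(1)] .
    ultimately have e1: "DF r1 = lam 1 Ubar 0 *\<^sub>R r1" and e2: "DF r2 = lam 2 Ubar 0 *\<^sub>R r2"
      using a1 a2 by auto
    have "linear DF" using a1(1) has_derivative_linear by blast
    moreover have "r1 \<noteq> 0" "r2 \<noteq> 0" using cfu by (auto simp: r1_def r2_def)
    moreover have "lam 1 Ubar 0 \<noteq> lam 2 Ubar 0" using cfu by simp
    ultimately show ?thesis using indep[OF _ e1 e2] by blast
  qed
  obtain c0 where c0: "c0 > 0" and low: "\<And>a b. c0 * (\<bar>a\<bar> + \<bar>b\<bar>) \<le> norm (a *\<^sub>R r1 + b *\<^sub>R r2)"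
    using lowerb[OF det] by blast
  define N where "N = norm r1"
  have N: "N \<ge> 0" by (simp add: N_def)
  define e where "e = min 1 (c0 / (2 * (N + 2)))"
  have e: "0 < e" "e \<le> 1" "e * (N + 2) \<le> c0 / 2"
  proof -
    show "0 < e" "e \<le> 1" using c0 N by (auto simp: e_def)
    have "e * (N + 2) \<le> c0 / (2 * (N + 2)) * (N + 2)"
      using N by (intro mult_right_mono) (auto simp: e_def)
    also have "\<dots> = c0 / 2" using N by (simp add: field_simps)
    finally show "e * (N + 2) \<le> c0 / 2" .
  qed
  define \<rho> where "\<rho> = min (e / (L + 1)) \<eta>"
  have \<rho>: "0 < \<rho>" "\<rho> \<le> \<eta>" "L * \<rho> \<le> e"
  proof -
    show "0 < \<rho>" using e L \<eta> by (simp add: \<rho>_def)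
    show "\<rho> \<le> \<eta>" by (simp add: \<rho>_def)
    have "L * \<rho> \<le> L * (e / (L + 1))" using L by (intro mult_left_mono) (auto simp: \<rho>_def)
    also have "\<dots> \<le> e" using L e by (simp add: field_simps)
    finally show "L * \<rho> \<le> e" .
  qed
  define \<epsilon> where "\<epsilon> = \<rho> / (N + 3)"
  have \<epsilon>: "0 < \<epsilon>" "\<epsilon> * (N + 3) = \<rho>" using \<rho> N by (auto simp: \<epsilon>_def)
  have eps3: "\<epsilon> * (N + 2) + \<epsilon> = \<rho>" using \<epsilon>(2) by (simp add: algebra_simps)
  have "\<epsilon> * 1 \<le> \<epsilon> * (N + 2)" using \<epsilon> N by (intro mult_left_mono) auto
  then have eps4: "2 * \<epsilon> \<le> \<rho>" "\<epsilon> \<le> \<rho>" using eps3 \<epsilon>(1) by linarith+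
  have inKr: "(a, V, 0) \<in> Kset \<eta> \<inter> cball x0 \<rho>" if "\<bar>a\<bar> + dist V Ubar \<le> \<rho>" for a V
  proof -
    have "dist x0 (a, V, 0) = norm (a, V - Ubar, 0::real)"
    proof -
      have "dist x0 (a, V, 0) = norm ((a, V, 0) - x0)" by (simp add: dist_norm norm_minus_commute)
      then show ?thesis by (simp add: x0_def)
    qed
    also have "\<dots> \<le> \<bar>a\<bar> + dist V Ubar" using norm3[of a "V - Ubar"] by (simp add: dist_norm)
    finally have "dist x0 (a, V, 0) \<le> \<rho>" using that by simp
    moreover have "(a, V, 0) \<in> Kset \<eta>"
    proof -
      have h: "\<bar>a\<bar> + dist V Ubar \<le> \<rho>" "0 \<le> dist V Ubar" "0 \<le> \<bar>a\<bar>" using that by auto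
      have "\<bar>a\<bar> \<le> \<eta>" "dist V Ubar \<le> \<eta>" using h \<rho>(2) by linarith+
      then have "\<bar>a\<bar> \<le> \<eta>" "dist Ubar V \<le> \<eta>" by (simp_all add: dist_commute)
      then show ?thesis using \<eta> by (auto simp: Kset_def abs_le_iff)
    qed
    ultimately show ?thesis by auto
  qed
  have lin1: "norm (f1 x - f1 y - F1 x0 (x - y)) \<le> norm (x - y) * e"
    if "x \<in> Kset \<eta> \<inter> cball x0 \<rho>" "y \<in> Kset \<eta> \<inter> cball x0 \<rho>" for x y
    using linF[OF d1 lip1 \<eta> x0K L that] mult_left_mono[OF \<rho>(3), of "norm (x - y)"] by simp
  have lin2: "norm (f2 x - f2 y - F2 x0 (x - y)) \<le> norm (x - y) * e"
    if "x \<in> Kset \<eta> \<inter> cball x0 \<rho>" "y \<in> Kset \<eta> \<inter> cball x0 \<rho>" for x y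
    using linF[OF d2 lip2 \<eta> x0K L that] mult_left_mono[OF \<rho>(3), of "norm (x - y)"] by simp
  have st2: "norm (Phi 1 b U 0 - Phi 1 b' U 0 - (b - b') *\<^sub>R r1) \<le> \<bar>b - b'\<bar> * e"
    if "dist U Ubar < \<epsilon>" "\<bar>b\<bar> < \<epsilon>" "\<bar>b'\<bar> < \<epsilon>" for U b b'
  proof -
    have "\<bar>b\<bar> + dist U Ubar \<le> \<rho>" "\<bar>b'\<bar> + dist U Ubar \<le> \<rho>" using that eps4 by linarith+
    from lin1[OF inKr[OF this(1)] inKr[OF this(2)]]
    show ?thesis by (simp add: f1e idr1' norm3a norm_Pair)
  qed
  have st1: "norm (Phi 1 b U 0 - U) \<le> \<bar>b\<bar> * (N + 1)" and st1d: "dist (Phi 1 b U 0) Ubar < \<epsilon> * (N + 2)"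
    if "dist U Ubar < \<epsilon>" "\<bar>b\<bar> < \<epsilon>" for U b
  proof -
    have "dist U Ubar < \<delta>" using that(1) eps4(2) \<rho>(2) \<eta>(2) by linarith
    then have "Phi 1 0 U 0 = U" using P0[of 1 U 0] assms(3) by simp
    with st2[OF that(1,2), of 0] \<epsilon> have h: "norm (Phi 1 b U 0 - U - b *\<^sub>R r1) \<le> \<bar>b\<bar> * e" by simp
    have "norm (Phi 1 b U 0 - U) \<le> norm (Phi 1 b U 0 - U - b *\<^sub>R r1) + norm (b *\<^sub>R r1)"
      using norm_triangle_sub[of "Phi 1 b U 0 - U" "b *\<^sub>R r1"] by linarith
    also have "\<dots> \<le> \<bar>b\<bar> * e + \<bar>b\<bar> * N" using h by (simp add: N_def)
    also have "\<dots> \<le> \<bar>b\<bar> * (N + 1)" using mult_left_mono[OF e(2) abs_ge_zero[of b]] by (simp add: algebra_simps)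
    finally show A: "norm (Phi 1 b U 0 - U) \<le> \<bar>b\<bar> * (N + 1)" .
    have "dist (Phi 1 b U 0) Ubar \<le> norm (Phi 1 b U 0 - U) + dist U Ubar"
      by (metis dist_norm dist_triangle)
    also have "\<dots> < \<epsilon> * (N + 1) + \<epsilon>"
      using A that N by (smt (verit) mult_right_mono abs_ge_zero)
    finally show "dist (Phi 1 b U 0) Ubar < \<epsilon> * (N + 2)" by (simp add: algebra_simps)
  qed
  have core: "c0 / 2 * (\<bar>b1 - b1'\<bar> + \<bar>b2 - b2'\<bar>) \<le> norm (Phi0 Phi b1 b2 U - Phi0 Phi b1' b2' U)"
    if U: "dist U Ubar < \<epsilon>" and b: "\<bar>b1\<bar> < \<epsilon>" "\<bar>b1'\<bar> < \<epsilon>" "\<bar>b2\<bar> < \<epsilon>" "\<bar>b2'\<bar> < \<epsilon>"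
    for U b1 b2 b1' b2'
  proof -
    define P where "P = Phi 1 b1 U 0"
    define P' where "P' = Phi 1 b1' U 0"
    define \<Delta>1 where "\<Delta>1 = b1 - b1'"
    define \<Delta>2 where "\<Delta>2 = b2 - b2'"
    have E2: "norm (P - P' - \<Delta>1 *\<^sub>R r1) \<le> \<bar>\<Delta>1\<bar> * e"
      using st2[OF U b(1,2)] by (simp add: P_def P'_def \<Delta>1_def)
    have nPP: "norm (P - P') \<le> \<bar>\<Delta>1\<bar> * (N + 1)"
    proof -
      have "norm (P - P') \<le> norm (P - P' - \<Delta>1 *\<^sub>R r1) + norm (\<Delta>1 *\<^sub>R r1)"
        using norm_triangle_sub[of "P - P'" "\<Delta>1 *\<^sub>R r1"] by linarith
      also have "\<dots> \<le> \<bar>\<Delta>1\<bar> * e + \<bar>\<Delta>1\<bar> * N" using E2 by (simp add: N_def)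
      also have "\<dots> \<le> \<bar>\<Delta>1\<bar> * (N + 1)" using mult_left_mono[OF e(2) abs_ge_zero[of \<Delta>1]] by (simp add: algebra_simps)
      finally show ?thesis .
    qed
    have "\<bar>b2\<bar> + dist P Ubar \<le> \<rho>" "\<bar>b2'\<bar> + dist P' Ubar \<le> \<rho>"
      using st1d[OF U b(1)] st1d[OF U b(2)] b(3,4) \<epsilon> unfolding P_def P'_def by (simp_all add: algebra_simps)
    from lin2[OF inKr[OF this(1)] inKr[OF this(2)]]
    have E1: "norm (f2 (b2, P, 0) - f2 (b2', P', 0) - (\<Delta>2 *\<^sub>R r2 + (P - P'))) \<le> norm (\<Delta>2, P - P', 0::real) * e"
      by (simp add: F2lin \<Delta>2_def)
    have nx: "norm (\<Delta>2, P - P', 0::real) \<le> \<bar>\<Delta>2\<bar> + \<bar>\<Delta>1\<bar> * (N + 1)"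
      using norm3[of \<Delta>2 "P - P'"] nPP by simp
    have Pdist: "dist P Ubar < \<delta>" "dist P' Ubar < \<delta>"
      using st1d[OF U b(1)] st1d[OF U b(2)] \<epsilon> \<rho> \<eta> N unfolding P_def P'_def by (simp_all add: algebra_simps)
    have eqF: "Phi0 Phi b1 b2 U - Phi0 Phi b1' b2' U = f2 (b2, P, 0) - f2 (b2', P', 0)"
      by (simp add: Phi0_def f2e P_def P'_def)
    define W where "W = \<Delta>1 *\<^sub>R r1 + \<Delta>2 *\<^sub>R r2"
    define Er where "Er = Phi0 Phi b1 b2 U - Phi0 Phi b1' b2' U - W"
    have "Er = (f2 (b2, P, 0) - f2 (b2', P', 0) - (\<Delta>2 *\<^sub>R r2 + (P - P'))) + (P - P' - \<Delta>1 *\<^sub>R r1)"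
      unfolding Er_def eqF W_def by (simp add: algebra_simps)
    then have "norm Er \<le> norm (\<Delta>2, P - P', 0::real) * e + \<bar>\<Delta>1\<bar> * e"
      using E1 E2 norm_triangle_ineq by (smt (verit))
    also have "\<dots> \<le> (\<bar>\<Delta>2\<bar> + \<bar>\<Delta>1\<bar> * (N + 1)) * e + \<bar>\<Delta>1\<bar> * e"
      using nx e by (simp add: mult_right_mono)
    also have "\<dots> \<le> (\<bar>\<Delta>1\<bar> + \<bar>\<Delta>2\<bar>) * (e * (N + 2))"
    proof -
      have "(\<bar>\<Delta>2\<bar> + \<bar>\<Delta>1\<bar> * (N + 1)) * e + \<bar>\<Delta>1\<bar> * e = e * (\<bar>\<Delta>2\<bar> + \<bar>\<Delta>1\<bar> * (N + 2))"
        by (simp add: algebra_simps)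
      also have "\<dots> \<le> e * ((\<bar>\<Delta>1\<bar> + \<bar>\<Delta>2\<bar>) * (N + 2))"
        using e N by (intro mult_left_mono) (auto simp: algebra_simps)
      finally show ?thesis by (simp add: algebra_simps)
    qed
    also have "\<dots> \<le> (\<bar>\<Delta>1\<bar> + \<bar>\<Delta>2\<bar>) * (c0 / 2)"
      using e by (intro mult_left_mono) auto
    finally have nEr: "norm Er \<le> (\<bar>\<Delta>1\<bar> + \<bar>\<Delta>2\<bar>) * (c0 / 2)" .
    have "c0 * (\<bar>\<Delta>1\<bar> + \<bar>\<Delta>2\<bar>) \<le> norm W" unfolding W_def by (rule low)
    moreover have "norm W \<le> norm (Phi0 Phi b1 b2 U - Phi0 Phi b1' b2' U) + norm Er"
      unfolding Er_def by (metis norm_triangle_sub norm_minus_commute diff_diff_eq2 add_diff_cancel_left')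
    ultimately show ?thesis using nEr unfolding \<Delta>1_def \<Delta>2_def by (simp add: algebra_simps)
  qed
  define C where "C = (2 * L + 2) / c0"
  have C: "C > 0" using L c0 by (simp add: C_def)
  have CL: "2 * L / c0 \<le> C" using c0 by (simp add: C_def divide_right_mono)
  have C1: "2 * 1 / c0 \<le> C" using c0 L by (simp add: C_def divide_right_mono)
  have main: "(\<forall>k\<in>{1::nat,2}. \<forall>\<alpha>k \<beta>1 \<beta>2.
          \<bar>\<alpha>k\<bar> < \<epsilon> \<and> \<bar>\<beta>1\<bar> < \<epsilon> \<and> \<bar>\<beta>2\<bar> < \<epsilon> \<and>
          UR = Phi0 Phi \<beta>1 \<beta>2 UL \<and> UR = Phi k \<alpha>k UL (\<tau>^2) \<longrightarrow>
            \<bar>\<beta>1 - (if k = 1 then \<alpha>k else 0)\<bar> \<le> C * \<bar>\<alpha>k\<bar> * \<tau>^2 \<and>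
            \<bar>\<beta>2 - (if k = 2 then \<alpha>k else 0)\<bar> \<le> C * \<bar>\<alpha>k\<bar> * \<tau>^2) \<and>
      (\<forall>\<beta>1 \<beta>2. \<bar>\<beta>1\<bar> < \<epsilon> \<and> \<bar>\<beta>2\<bar> < \<epsilon> \<and> UR = Phi0 Phi \<beta>1 \<beta>2 UL \<longrightarrow>
          \<bar>\<beta>1\<bar> \<le> C * norm (UR - UL) \<and> \<bar>\<beta>2\<bar> \<le> C * norm (UR - UL))"
    if H: "0 < \<tau>" "\<tau> < min 1 \<eta>" "dist UL Ubar < \<epsilon>" "dist UR Ubar < \<epsilon>" for \<tau> UL UR
  proof (intro conjI ballI allI impI)
    have ULd: "dist UL Ubar < \<delta>" using H(3) eps4(2) \<rho>(2) \<eta>(2) by linarith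
    have ULc: "UL \<in> cball Ubar \<eta>" using H(3) eps4(2) \<rho>(2) by (simp add: dist_commute)
    define s where "s = \<tau>^2"
    have s: "0 \<le> s" "s \<le> \<eta>"
    proof -
      show "0 \<le> s" by (simp add: s_def)
      have "\<tau> * \<tau> \<le> \<tau> * 1" using H(1,2) by (intro mult_left_mono) auto
      then show "s \<le> \<eta>" using H(2) by (simp add: s_def power2_eq_square)
    qed
    have Phi00: "Phi0 Phi 0 0 UL = UL" using P0[of 1 UL 0] P0[of 2 UL 0] ULd assms(3) by (simp add: Phi0_def)
    fix k :: nat and \<alpha>k \<beta>1 \<beta>2
    assume k: "k \<in> {1, 2}"
      and A: "\<bar>\<alpha>k\<bar> < \<epsilon> \<and> \<bar>\<beta>1\<bar> < \<epsilon> \<and> \<bar>\<beta>2\<bar> < \<epsilon> \<and> UR = Phi0 Phi \<beta>1 \<beta>2 UL \<and> UR = Phi k \<alpha>k UL (\<tau>^2)"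
    have a\<eta>: "\<bar>\<alpha>k\<bar> \<le> \<eta>" using A eps4(2) \<rho>(2) by linarith
    have X: "\<bar>\<beta>1 - (if k = 1 then \<alpha>k else 0)\<bar> + \<bar>\<beta>2 - (if k = 2 then \<alpha>k else 0)\<bar> \<le> C * (s * \<bar>\<alpha>k\<bar>)"
    proof (cases "k = 1")
      case True
      have eqR: "Phi0 Phi \<beta>1 \<beta>2 UL = Phi 1 \<alpha>k UL s" using A True by (auto simp: s_def)
      have Pd: "dist (Phi 1 \<alpha>k UL 0) Ubar < \<delta>"
        using st1d[OF H(3), of \<alpha>k] A eps3 \<epsilon>(1) \<rho>(2) \<eta>(2) by linarith
      have "Phi0 Phi \<alpha>k 0 UL = Phi 1 \<alpha>k UL 0"
        using P0[of 2 "Phi 1 \<alpha>k UL 0" 0] Pd assms(3) by (simp add: Phi0_def)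
      moreover have "c0 / 2 * (\<bar>\<beta>1 - \<alpha>k\<bar> + \<bar>\<beta>2 - 0\<bar>) \<le> norm (Phi0 Phi \<beta>1 \<beta>2 UL - Phi0 Phi \<alpha>k 0 UL)"
        using core[of UL \<beta>1 \<alpha>k \<beta>2 0, OF H(3)] A \<epsilon>(1) by simp
      ultimately have "c0 / 2 * (\<bar>\<beta>1 - \<alpha>k\<bar> + \<bar>\<beta>2 - 0\<bar>) \<le> norm (Phi 1 \<alpha>k UL s - Phi 1 \<alpha>k UL 0)"
        using eqR by simp
      moreover have "norm (Phi 1 \<alpha>k UL s - Phi 1 \<alpha>k UL 0) \<le> L * (s * \<bar>\<alpha>k\<bar>)"
        using sF[OF d1 lip1 \<eta> L f0_1 a\<eta> ULc s] by (simp add: f1e mult.assoc)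
      ultimately show ?thesis using arith1[OF c0 _ _ CL] s True by simp
    next
      case False
      then have k2: "k = 2" using k by simp
      have eqR: "Phi0 Phi \<beta>1 \<beta>2 UL = Phi 2 \<alpha>k UL s" using A k2 by (auto simp: s_def)
      have "Phi0 Phi 0 \<alpha>k UL = Phi 2 \<alpha>k UL 0"
        using P0[of 1 UL 0] ULd assms(3) by (simp add: Phi0_def)
      moreover have "c0 / 2 * (\<bar>\<beta>1 - 0\<bar> + \<bar>\<beta>2 - \<alpha>k\<bar>) \<le> norm (Phi0 Phi \<beta>1 \<beta>2 UL - Phi0 Phi 0 \<alpha>k UL)"
        using core[of UL \<beta>1 0 \<beta>2 \<alpha>k, OF H(3)] A \<epsilon>(1) by simp
      ultimately have "c0 / 2 * (\<bar>\<beta>1 - 0\<bar> + \<bar>\<beta>2 - \<alpha>k\<bar>) \<le> norm (Phi 2 \<alpha>k UL s - Phi 2 \<alpha>k UL 0)"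
        using eqR by simp
      moreover have "norm (Phi 2 \<alpha>k UL s - Phi 2 \<alpha>k UL 0) \<le> L * (s * \<bar>\<alpha>k\<bar>)"
        using sF[OF d2 lip2 \<eta> L f0_2 a\<eta> ULc s] by (simp add: f2e mult.assoc)
      ultimately show ?thesis using arith1[OF c0 _ _ CL] s k2 by simp
    qed
    have Ceq: "C * (s * \<bar>\<alpha>k\<bar>) = C * \<bar>\<alpha>k\<bar> * \<tau>^2" by (simp add: s_def)
    show "\<bar>\<beta>1 - (if k = 1 then \<alpha>k else 0)\<bar> \<le> C * \<bar>\<alpha>k\<bar> * \<tau>^2"
      using X Ceq abs_ge_zero[of "\<beta>2 - (if k = 2 then \<alpha>k else 0)"] by linarith
    show "\<bar>\<beta>2 - (if k = 2 then \<alpha>k else 0)\<bar> \<le> C * \<bar>\<alpha>k\<bar> * \<tau>^2"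
      using X Ceq abs_ge_zero[of "\<beta>1 - (if k = 1 then \<alpha>k else 0)"] by linarith
  next
    have ULd: "dist UL Ubar < \<delta>" using H(3) eps4(2) \<rho>(2) \<eta>(2) by linarith
    have Phi00: "Phi0 Phi 0 0 UL = UL" using P0[of 1 UL 0] P0[of 2 UL 0] ULd assms(3) by (simp add: Phi0_def)
    fix \<beta>1 \<beta>2
    assume B: "\<bar>\<beta>1\<bar> < \<epsilon> \<and> \<bar>\<beta>2\<bar> < \<epsilon> \<and> UR = Phi0 Phi \<beta>1 \<beta>2 UL"
    have "c0 / 2 * (\<bar>\<beta>1 - 0\<bar> + \<bar>\<beta>2 - 0\<bar>) \<le> norm (Phi0 Phi \<beta>1 \<beta>2 UL - Phi0 Phi 0 0 UL)"
      using core[of UL \<beta>1 0 \<beta>2 0, OF H(3)] B \<epsilon>(1) by simp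
    then have "c0 / 2 * (\<bar>\<beta>1\<bar> + \<bar>\<beta>2\<bar>) \<le> 1 * norm (UR - UL)" using B Phi00 by simp
    from arith1[OF c0 this _ C1] have "\<bar>\<beta>1\<bar> + \<bar>\<beta>2\<bar> \<le> C * norm (UR - UL)" by simp
    then show "\<bar>\<beta>1\<bar> \<le> C * norm (UR - UL)" "\<bar>\<beta>2\<bar> \<le> C * norm (UR - UL)" by linarith+
  qed
  have t1: "min 1 \<eta> > 0" using \<eta> by simp
  show ?thesis
    apply (rule exI[of _ \<epsilon>], rule exI[of _ "min 1 \<eta>"], rule exI[of _ C])
    using \<epsilon>(1) t1 C main by blast
qed
end
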